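(* Suppose conditions (A.2) and (A.3) hold. Let $\gamma_k:=\sum_{i=0}^{k-1}\alpha_i$, let $g:(0,\infty)\to(0,\infty)$, define $\beta_k:=g(\gamma_k)$, let $T>0$ and let $\{m_k\}_k$ be the time indices associated with $T$. Assume (i) $\sum_{k=0}^\infty\alpha_k^2g(\gamma_k)^2\sigma_k^2<\infty$; (ii) there is an interval $I=[\iota,\infty)$ such that $g'(x)>0$ for all $x\in I$. Then condition (A.4) holds (with this sequence $\{\beta_k\}_k$), and for every $\delta\in(0,1)$ there is $N_\delta\in\mathbb N$ such that (a) $\delta Tk\le\gamma_{m_{n+k}}-\gamma_{m_n}\le Tk$ for all $k\in\mathbb N$ and $n\ge N_\delta$; (b) $\sum_{k=n}^\infty g(\gamma_{m_k})^{-2\vartheta}\le g(\gamma_{m_n})^{-2\vartheta}+(\delta T)^{-1}\int_{\gamma_{m_n}}^\infty g(t)^{-2\vartheta}\,\mathrm dt$ for all $\vartheta\in(0,1)$ and $n\ge N_\delta$.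
   Context: Setting: a filtered probability space $(\Omega,\mathcal F,\{\mathcal F_k\}_k,\mathbb P)$, $f:\mathbb R^d\to\mathbb R$ continuously differentiable, step sizes $\{\alpha_k\}_k\subset(0,\infty)$, and a stochastic process $\{x^k\}_k$ ($x^k$ $\mathcal F_k$-measurable) with $\mathcal F_{k+1}$-measurable stochastic gradients $g^k$ and errors $e^k=g^k-\nabla f(x^k)$ (as generated by the normal map-based stochastic proximal gradient method $z^{k+1}=z^k-\alpha_k(g^k+(z^k-\mathrm{prox}_{\lambda\varphi}(z^k))/\lambda)$, $x^{k}=\mathrm{prox}_{\lambda\varphi}(z^{k})$). Conditions: (A.2) $\mathbb E[g^k\mid\mathcal F_k]=\nabla f(x^k)$ a.s. and there is $\{\sigma_k\}_k\subseteq\mathbb R_+$ with $\mathbb E\|e^k\|^2\le\sigma_k^2$ for all $k$. (A.3) $\sum_k\alpha_k=\infty$, $\alpha_k\to0$. (A.4) There is a positive sequence $\{\beta_k\}_k$, non-decreasing for all $k$ sufficiently large, with $\sum_k\alpha_k^2\beta_k^2\sigma_k^2<\infty$. Time indices: $\tau_{k,n}=\sum_{i=k}^{n-1}\alpha_i$, $\varpi(k,T)=\max\{k+1,\sup\{n\ge k:\tau_{k,n}\le T\}\}$, $m_0=0$, $m_{k+1}=\varpi(m_k,T)$. *)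

theory Defs
  imports "HOL-Analysis.Analysis"
begin

definition tau :: "(nat \<Rightarrow> real) \<Rightarrow> nat \<Rightarrow> nat \<Rightarrow> real" where
  "tau \<alpha> k n = (\<Sum>i\<in>{k..<n}. \<alpha> i)"

definition gam :: "(nat \<Rightarrow> real) \<Rightarrow> nat \<Rightarrow> real" where
  "gam \<alpha> k = (\<Sum>i<k. \<alpha> i)"

definition varpi :: "(nat \<Rightarrow> real) \<Rightarrow> real \<Rightarrow> nat \<Rightarrow> nat" where
  "varpi \<alpha> T k = max (k + 1) (Sup {n. n \<ge> k \<and> tau \<alpha> k n \<le> T})"

primrec mseq :: "(nat \<Rightarrow> real) \<Rightarrow> real \<Rightarrow> nat \<Rightarrow> nat" where
  "mseq \<alpha> T 0 = 0"
| "mseq \<alpha> T (Suc k) = varpi \<alpha> T (mseq \<alpha> T k)"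

definition condA4 :: "(nat \<Rightarrow> real) \<Rightarrow> (nat \<Rightarrow> real) \<Rightarrow> (nat \<Rightarrow> real) \<Rightarrow> bool" where
  "condA4 \<alpha> \<sigma> \<beta> \<longleftrightarrow>
     (\<forall>k. \<beta> k > 0) \<and> (\<exists>K. \<forall>k\<ge>K. \<beta> k \<le> \<beta> (Suc k)) \<and>
     summable (\<lambda>k. (\<alpha> k)\<^sup>2 * (\<beta> k)\<^sup>2 * (\<sigma> k)\<^sup>2)"

end

theory Submission
  imports Defs
begin

lemma interval_bound:
  fixes h :: "real \<Rightarrow> real" and a b c d :: real
  assumes "c \<le> a" "a < b" "d \<le> b - a" "0 < d" "\<And>t. a \<le> t \<Longrightarrow> t \<le> b \<Longrightarrow> h b \<le> h t" "0 \<le> h b"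
  shows "ennreal (h b) \<le> ennreal (1/d) * (\<integral>\<^sup>+ t. ennreal (h t) * indicator {c..} t * indicator {a..<b} t \<partial>lborel)"
proof -
  have "(\<integral>\<^sup>+ t. ennreal (h b) * indicator {a..<b} t \<partial>lborel) \<le> (\<integral>\<^sup>+ t. ennreal (h t) * indicator {c..} t * indicator {a..<b} t \<partial>lborel)"
    using assms by (intro nn_integral_mono) (auto simp: indicator_def intro: ennreal_leI)
  moreover have "(\<integral>\<^sup>+ t. ennreal (h b) * indicator {a..<b} t \<partial>lborel) = ennreal (h b) * ennreal (b - a)"
    using assms by (subst nn_integral_cmult_indicator) auto
  ultimately have "ennreal (1/d) * (ennreal (h b) * ennreal (b - a)) \<le> ennreal (1/d) * (\<integral>\<^sup>+ t. ennreal (h t) * indicator {c..} t * indicator {a..<b} t \<partial>lborel)"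
    by (simp add: mult_left_mono)
  moreover have "ennreal (1/d) * (ennreal (h b) * ennreal (b - a)) = ennreal (h b * ((b - a)/d))"
    using assms by (simp add: ennreal_mult'' [symmetric] mult.commute mult.left_commute)
  moreover have "h b \<le> h b * ((b - a)/d)"
  proof -
    have "1 \<le> (b - a)/d" using assms by simp
    then show ?thesis using assms(6) by (metis mult_left_mono mult.right_neutral)
  qed
  ultimately show ?thesis by (metis ennreal_leI order_trans)
qed

lemma tau_gam: "k \<le> n \<Longrightarrow> tau \<alpha> k n = gam \<alpha> n - gam \<alpha> k"
  unfolding tau_def gam_def by (metis atLeast0LessThan sum_diff_nat_ivl zero_le)

lemma gam_Suc: "gam \<alpha> (Suc k) = gam \<alpha> k + \<alpha> k"
  unfolding gam_def by simp

lemma varpi_props: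
  assumes apos: "\<forall>k. \<alpha> k > 0" and div: "filterlim (\<lambda>n. \<Sum>i<n. \<alpha> i) at_top sequentially" and Tp: "T > 0"
  shows "k < varpi \<alpha> T k"
    and "\<alpha> k \<le> T \<Longrightarrow> gam \<alpha> (varpi \<alpha> T k) - gam \<alpha> k \<le> T \<and> T < gam \<alpha> (varpi \<alpha> T k) + \<alpha> (varpi \<alpha> T k) - gam \<alpha> k"
proof -
  define S where "S = {n. n \<ge> k \<and> tau \<alpha> k n \<le> T}"
  have "eventually (\<lambda>n. (\<Sum>i<n. \<alpha> i) > gam \<alpha> k + T) sequentially"
    using div by (simp add: filterlim_at_top_dense)
  then obtain M where M: "\<And>n. n \<ge> M \<Longrightarrow> gam \<alpha> n > gam \<alpha> k + T"
    unfolding eventually_sequentially gam_def by blast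
  have fin: "finite S"
  proof -
    have "S \<subseteq> {..<M}"
    proof
      fix n assume "n \<in> S"
      then have "n \<ge> k" "gam \<alpha> n - gam \<alpha> k \<le> T" by (auto simp: S_def tau_gam)
      then show "n \<in> {..<M}" using M[of n] by force
    qed
    then show ?thesis using finite_subset by blast
  qed
  have kS: "k \<in> S" using Tp by (simp add: S_def tau_def)
  define p where "p = Max S"
  have pS: "p \<in> S" using fin kS p_def Max_in by blast
  have ne: "S \<noteq> {}" using kS by auto
  have sup: "Sup S = p" unfolding p_def by (rule cSup_eq_Max[OF fin ne])
  have "Suc p \<notin> S"
  proof
    assume "Suc p \<in> S" then have "Suc p \<le> Max S" by (rule Max_ge[OF fin])
    then show False unfolding p_def[symmetric] by simp
  qed
  moreover have pk: "p \<ge> k" using pS S_def by auto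
  ultimately have nT: "tau \<alpha> k (Suc p) > T" by (auto simp: S_def)
  have vp: "varpi \<alpha> T k = max (k+1) p" unfolding varpi_def S_def[symmetric] sup ..
  show "k < varpi \<alpha> T k" using vp by simp
  assume ak: "\<alpha> k \<le> T"
  have "p \<noteq> k"
  proof
    assume "p = k" then have "tau \<alpha> k (Suc p) = \<alpha> k" by (simp add: tau_def)
    then show False using nT ak by simp
  qed
  then have "varpi \<alpha> T k = p" using vp pk by simp
  then show "gam \<alpha> (varpi \<alpha> T k) - gam \<alpha> k \<le> T \<and> T < gam \<alpha> (varpi \<alpha> T k) + \<alpha> (varpi \<alpha> T k) - gam \<alpha> k"
    using pS nT pk by (auto simp: S_def tau_gam gam_Suc)
qed

theorem lemma3p8:
  fixes \<alpha> \<sigma> :: "nat \<Rightarrow> real" and g :: "real \<Rightarrow> real" and T \<iota> :: real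
  assumes alpha_pos: "\<forall>k. \<alpha> k > 0"
    and sigma_nonneg: "\<forall>k. \<sigma> k \<ge> 0"
    and A3_div: "filterlim (\<lambda>n. \<Sum>i<n. \<alpha> i) at_top sequentially"
    and A3_lim: "\<alpha> \<longlonglongrightarrow> 0"
    and g_pos: "\<forall>x\<ge>0. g x > 0"
    and T_pos: "T > 0"
    and hyp_i: "summable (\<lambda>k. (\<alpha> k)\<^sup>2 * (g (gam \<alpha> k))\<^sup>2 * (\<sigma> k)\<^sup>2)"
    and hyp_ii: "\<forall>x\<ge>\<iota>. \<exists>D>0. (g has_real_derivative D) (at x)"
  shows "condA4 \<alpha> \<sigma> (\<lambda>k. g (gam \<alpha> k)) \<and>
    (\<forall>\<delta>. 0 < \<delta> \<and> \<delta> < 1 \<longrightarrow> (\<exists>N::nat.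
       (\<forall>k n. n \<ge> N \<longrightarrow>
          \<delta> * T * real k \<le> gam \<alpha> (mseq \<alpha> T (n + k)) - gam \<alpha> (mseq \<alpha> T n) \<and>
          gam \<alpha> (mseq \<alpha> T (n + k)) - gam \<alpha> (mseq \<alpha> T n) \<le> T * real k) \<and>
       (\<forall>\<theta> n. 0 < \<theta> \<and> \<theta> < 1 \<and> n \<ge> N \<longrightarrow>
          (\<Sum>k. ennreal (g (gam \<alpha> (mseq \<alpha> T (k + n))) powr (- 2 * \<theta>)))
          \<le> ennreal (g (gam \<alpha> (mseq \<alpha> T n)) powr (- 2 * \<theta>))
             + ennreal (1 / (\<delta> * T)) *
               (\<integral>\<^sup>+ t\<in>{gam \<alpha> (mseq \<alpha> T n)..}. ennreal (g t powr (- 2 * \<theta>)) \<partial>lborel))))"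
  proof -
  let ?G = "gam \<alpha>"
  let ?m = "mseq \<alpha> T"
  have Gsuc: "?G k < ?G (Suc k)" for k using alpha_pos by (simp add: gam_Suc)
  then have Gsm: "strict_mono ?G" by (rule strict_monoI_Suc)
  have Gle: "i \<le> j \<Longrightarrow> ?G i \<le> ?G j" for i j using Gsm by (simp add: strict_mono_less_eq)
  have G0: "?G k \<ge> 0" for k unfolding gam_def using alpha_pos by (simp add: sum_nonneg less_imp_le)
  have Gtop: "filterlim ?G at_top sequentially" using A3_div unfolding gam_def .
  have gmono: "g x < g y" if "\<iota> \<le> x" "x < y" for x y
    using that(1) hyp_ii by (intro DERIV_pos_imp_increasing[OF that(2)]) (meson order_trans)
  have gle: "g x \<le> g y" if "\<iota> \<le> x" "x \<le> y" for x y
    using gmono[of x y] that by (cases "x = y") auto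
  have gcont: "continuous_on {\<iota>..} g"
    using hyp_ii by (intro continuous_at_imp_continuous_on) (auto intro: DERIV_isCont)
  have msuc: "?m k < ?m (Suc k)" for k
    using varpi_props(1)[OF alpha_pos A3_div T_pos] by simp
  have mge: "k \<le> ?m k" for k
    by (induction k) (use msuc in \<open>auto intro: Suc_le_eq[THEN iffD2] le_less_trans\<close>)
  have part1: "condA4 \<alpha> \<sigma> (\<lambda>k. g (gam \<alpha> k))"
    unfolding condA4_def
  proof (intro conjI)
    show "\<forall>k. g (gam \<alpha> k) > 0" using g_pos G0 by auto
    obtain K where K: "\<And>k. k \<ge> K \<Longrightarrow> ?G k \<ge> \<iota>"
      using Gtop unfolding filterlim_at_top eventually_sequentially by blast
    show "\<exists>K. \<forall>k\<ge>K. g (gam \<alpha> k) \<le> g (gam \<alpha> (Suc k))"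
      using K Gsuc gle less_imp_le by blast
    show "summable (\<lambda>k. (\<alpha> k)\<^sup>2 * (g (gam \<alpha> k))\<^sup>2 * (\<sigma> k)\<^sup>2)" by (rule hyp_i)
  qed
  show ?thesis
  proof (intro conjI part1 allI impI)
    fix \<delta> :: real assume d: "0 < \<delta> \<and> \<delta> < 1"
    have "(1 - \<delta>) * T > 0" using d T_pos by simp
    then have "eventually (\<lambda>i. \<alpha> i < (1 - \<delta>) * T) sequentially"
      using A3_lim by (rule order_tendstoD(2)[rotated])
    then obtain N1 where N1: "\<And>i. i \<ge> N1 \<Longrightarrow> \<alpha> i < (1 - \<delta>) * T"
      unfolding eventually_sequentially by blast
    obtain N2 where N2: "\<And>k. k \<ge> N2 \<Longrightarrow> ?G k \<ge> \<iota>"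
      using Gtop unfolding filterlim_at_top eventually_sequentially by blast
    define N where "N = max N1 N2"
    have step: "\<delta> * T \<le> ?G (?m (Suc j)) - ?G (?m j) \<and> ?G (?m (Suc j)) - ?G (?m j) \<le> T" if "j \<ge> N" for j
    proof -
      have "?m j \<ge> N1" using mge[of j] that N_def by simp
      then have a1: "\<alpha> (?m j) \<le> T" using N1[of "?m j"] d T_pos
        by (smt (verit, ccfv_SIG) mult_less_cancel_right2)
      have "?m (Suc j) \<ge> N1" using mge[of "Suc j"] that N_def by simp
      then have a2: "\<alpha> (?m (Suc j)) < (1 - \<delta>) * T" using N1 by blast
      have "?m (Suc j) = varpi \<alpha> T (?m j)" by simp
      then show ?thesis using varpi_props(2)[OF alpha_pos A3_div T_pos a1] a2
        by (simp add: algebra_simps)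
    qed
    have parta: "\<delta> * T * real k \<le> ?G (?m (n + k)) - ?G (?m n) \<and> ?G (?m (n + k)) - ?G (?m n) \<le> T * real k"
      if "n \<ge> N" for n k
    proof (induction k)
      case 0 then show ?case by simp
    next
      case (Suc k)
      have "n + k \<ge> N" using that by simp
      from step[OF this] Suc show ?case by (simp add: algebra_simps)
    qed
    show "\<exists>N::nat.
       (\<forall>k n. n \<ge> N \<longrightarrow>
          \<delta> * T * real k \<le> gam \<alpha> (mseq \<alpha> T (n + k)) - gam \<alpha> (mseq \<alpha> T n) \<and>
          gam \<alpha> (mseq \<alpha> T (n + k)) - gam \<alpha> (mseq \<alpha> T n) \<le> T * real k) \<and>
       (\<forall>\<theta> n. 0 < \<theta> \<and> \<theta> < 1 \<and> n \<ge> N \<longrightarrow>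
          (\<Sum>k. ennreal (g (gam \<alpha> (mseq \<alpha> T (k + n))) powr (- 2 * \<theta>)))
          \<le> ennreal (g (gam \<alpha> (mseq \<alpha> T n)) powr (- 2 * \<theta>))
             + ennreal (1 / (\<delta> * T)) *
               (\<integral>\<^sup>+ t\<in>{gam \<alpha> (mseq \<alpha> T n)..}. ennreal (g t powr (- 2 * \<theta>)) \<partial>lborel))"
    proof (intro exI conjI allI impI)
      fix k n :: nat assume "n \<ge> N"
      then show "\<delta> * T * real k \<le> gam \<alpha> (mseq \<alpha> T (n + k)) - gam \<alpha> (mseq \<alpha> T n)"
        "gam \<alpha> (mseq \<alpha> T (n + k)) - gam \<alpha> (mseq \<alpha> T n) \<le> T * real k"
        using parta by auto
    next
      fix \<theta> :: real and n :: nat assume th: "0 < \<theta> \<and> \<theta> < 1 \<and> n \<ge> N"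
      define a where "a k = ?G (?m (k + n))" for k
      define h where "h t = g t powr (- 2 * \<theta>)" for t
      define c where "c = a 0"
      define C where "C = ennreal (1 / (\<delta> * T))"
      define H where "H t = ennreal (h t) * indicator {c..} t" for t
      have astep: "\<delta> * T \<le> a (Suc k) - a k" for k
        using step[of "k + n"] th unfolding a_def by simp
      have apos: "a k < a (Suc k)" for k using astep[of k] d T_pos
        by (smt (verit) mult_pos_pos)
      have ac: "c \<le> a k" for k
      proof (induction k)
        case 0 then show ?case by (simp add: c_def)
      next
        case (Suc k) then show ?case using apos[of k] by simp
      qed
      have c_iota: "\<iota> \<le> c"
        using N2[of n] th N_def Gle[OF mge[of n]] unfolding c_def a_def by simp
      have c0: "0 \<le> c" unfolding c_def a_def by (rule G0)
      have hanti: "h t \<le> h s" if "c \<le> s" "s \<le> t" for s t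
        unfolding h_def
        using that c_iota c0 th g_pos gle[of s t]
        by (intro powr_mono2') auto
      have hnn: "0 \<le> h t" for t by (simp add: h_def)
      have hcont: "continuous_on {c..} h"
        unfolding h_def
        using g_pos c0 continuous_on_subset[OF gcont, of "{c..}"] c_iota
        by (intro continuous_intros) (auto, metis less_irrefl order_trans)
      have fm: "(\<lambda>x. indicator {c..} x *\<^sub>R h x) \<in> borel_measurable borel"
        by (rule borel_measurable_continuous_on_indicator[OF _ hcont]) auto
      have meas: "H \<in> borel_measurable lborel"
      proof -
        have "(\<lambda>x. ennreal (indicator {c..} x *\<^sub>R h x)) \<in> borel_measurable borel"
          using fm by measurable
        moreover have "(\<lambda>x. ennreal (indicator {c..} x *\<^sub>R h x)) = H"
          by (auto simp: H_def indicator_def fun_eq_iff)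
        ultimately show ?thesis by simp
      qed
      have piece: "ennreal (h (a (Suc k))) \<le> C * (\<integral>\<^sup>+ t. H t * indicator {a k..<a (Suc k)} t \<partial>lborel)" for k
        unfolding C_def H_def
        using d T_pos astep[of k] apos[of k] ac[of k]
        by (intro interval_bound) (auto intro: hanti order_trans hnn)
      note meas[measurable]
      have partial: "(\<Sum>k<K. ennreal (h (a (Suc k)))) \<le> C * (\<integral>\<^sup>+ t. H t * indicator {a 0..<a K} t \<partial>lborel)" for K
      proof (induction K)
        case 0 then show ?case by simp
      next
        case (Suc K)
        have ind: "H t * indicator {a 0..<a (Suc K)} t = H t * indicator {a 0..<a K} t + H t * indicator {a K..<a (Suc K)} t" for t
          using ac[of K] apos[of K] ac[of 0] c_def
          by (auto simp: indicator_def) 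
        have "(\<integral>\<^sup>+ t. H t * indicator {a 0..<a (Suc K)} t \<partial>lborel)
            = (\<integral>\<^sup>+ t. H t * indicator {a 0..<a K} t \<partial>lborel) + (\<integral>\<^sup>+ t. H t * indicator {a K..<a (Suc K)} t \<partial>lborel)"
          unfolding ind by (rule nn_integral_add) measurable
        then have "C * (\<integral>\<^sup>+ t. H t * indicator {a 0..<a (Suc K)} t \<partial>lborel)
            = C * (\<integral>\<^sup>+ t. H t * indicator {a 0..<a K} t \<partial>lborel) + C * (\<integral>\<^sup>+ t. H t * indicator {a K..<a (Suc K)} t \<partial>lborel)"
          by (simp add: distrib_left)
        then show ?case using Suc piece[of K] by (simp add: add_mono)
      qed
      have bound: "(\<integral>\<^sup>+ t. H t * indicator {a 0..<a K} t \<partial>lborel) \<le> (\<integral>\<^sup>+ t. H t \<partial>lborel)" for K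
        by (intro nn_integral_mono) (auto simp: indicator_def)
      have fin: "(\<Sum>k. ennreal (h (a k))) \<le> ennreal (h c) + C * (\<integral>\<^sup>+ t. H t \<partial>lborel)"
      proof (rule suminf_le_const[OF summableI])
        fix K
        show "(\<Sum>k<K. ennreal (h (a k))) \<le> ennreal (h c) + C * (\<integral>\<^sup>+ t. H t \<partial>lborel)"
        proof (cases K)
          case 0 then show ?thesis by simp
        next
          case (Suc K')
          have "(\<Sum>k<K. ennreal (h (a k))) = ennreal (h c) + (\<Sum>k<K'. ennreal (h (a (Suc k))))"
            unfolding Suc sum.lessThan_Suc_shift c_def ..
          also have "\<dots> \<le> ennreal (h c) + C * (\<integral>\<^sup>+ t. H t \<partial>lborel)"
            using partial[of K'] bound[of K'] by (intro add_left_mono) (meson mult_left_mono order_trans zero_le)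
          finally show ?thesis .
        qed
      qed
      show "(\<Sum>k. ennreal (g (gam \<alpha> (mseq \<alpha> T (k + n))) powr (- 2 * \<theta>)))
          \<le> ennreal (g (gam \<alpha> (mseq \<alpha> T n)) powr (- 2 * \<theta>))
             + ennreal (1 / (\<delta> * T)) *
               (\<integral>\<^sup>+ t\<in>{gam \<alpha> (mseq \<alpha> T n)..}. ennreal (g t powr (- 2 * \<theta>)) \<partial>lborel)"
        using fin unfolding H_def C_def h_def a_def c_def by simp
    qed
  qed
qed

end
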